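(* Let $S=\{g_1,\dots,g_d\}$ be a finite set of generator symbols, $\mathcal C$ a finite set of colors, and $T$ a finite set of Wang tiles on $\mathcal C$ and $S$. Then $T$ satisfies condition $(\star\star)'$ if and only if the family of graphs $\Gamma_1,\dots,\Gamma_d$ associated to $T$ satisfies condition $(\star\star)$.
   Context: A Wang tile on $\mathcal C$ and $S$ is a map $\tau: S\cup S^{-1}\to\mathcal C$. The graphs associated to $T$: for each $1\le i\le d$, $\Gamma_i$ is the directed graph with vertex set $T$ and an edge $\tau\to\tau'$ if and only if $\tau(g_i)=\tau'(g_i^{-1})$. A cycle in a directed graph $\Gamma$ is a closed walk $\overline{a_1,\dots,a_n}$ (vertices and edges may repeat) with edges $a_k\to a_{k+1}$ for $k<n$ and $a_n\to a_1$; it is simple if $a_1,\dots,a_n$ are pairwise distinct. For a cycle $w$ and vertex $a$, $|w|_a=\#\{k : a_k=a\}$. Let $\mathcal{SC}(\Gamma_i)=\{\omega_i^1,\dots,\omega_i^{m_i}\}$ be the (finite) set of simple cycles of $\Gamma_i$ (up to cyclic rotation). Condition $(\star\star)$: every $\Gamma_i$ contains at least one cycle, and there exist nonnegative reals $x_{i,j}$ ($1\le i\le d$, $1\le j\le m_i$), not all zero, such that for every vertex $a\in T$, $\sum_{j=1}^{m_1} x_{1,j}|\omega_1^j|_a=\sum_{j=1}^{m_2} x_{2,j}|\omega_2^j|_a=\dots=\sum_{j=1}^{m_d} x_{d,j}|\omega_d^j|_a$. Condition $(\star\star)'$: for $g\in S\cup S^{-1}$ and $c\in\mathcal C$ let $c_g=\{\tau\in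 T:\tau(g)=c\}$. $T$ satisfies $(\star\star)'$ if there exist nonnegative reals $(x_\tau)_{\tau\in T}$, not all zero, with $\sum_{\tau\in c_g}x_\tau=\sum_{\tau\in c_{g^{-1}}}x_\tau$ for all $g\in S$ and all $c\in\mathcal C$. *)

theory Defs
  imports Complex_Main
begin

text \<open>Generators are elements of a set S :: 'g set; the symbol set S \<union> S^-1 is
  encoded as pairs (g, inv) with g \<in> S, where (g, False) stands for g and
  (g, True) stands for g^-1.  A Wang tile is a map from these symbols to colours.\<close>

type_synonym ('g, 'c) wang_tile = "'g \<times> bool \<Rightarrow> 'c"

definition is_wang_tile :: "'g set \<Rightarrow> 'c set \<Rightarrow> ('g, 'c) wang_tile \<Rightarrow> bool" where
  "is_wang_tile S C \<tau> \<longleftrightarrow>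
     (\<forall>g\<in>S. \<forall>b. \<tau> (g, b) \<in> C) \<and> (\<forall>g b. g \<notin> S \<longrightarrow> \<tau> (g, b) = undefined)"

definition gedge :: "('g, 'c) wang_tile set \<Rightarrow> 'g \<Rightarrow> ('g, 'c) wang_tile \<Rightarrow> ('g, 'c) wang_tile \<Rightarrow> bool" where
  "gedge T g \<tau> \<tau>' \<longleftrightarrow> \<tau> \<in> T \<and> \<tau>' \<in> T \<and> \<tau> (g, False) = \<tau>' (g, True)"

definition is_cycle :: "('g, 'c) wang_tile set \<Rightarrow> 'g \<Rightarrow> ('g, 'c) wang_tile list \<Rightarrow> bool" where
  "is_cycle T g xs \<longleftrightarrow> xs \<noteq> [] \<and> set xs \<subseteq> T \<and>
     (\<forall>k. Suc k < length xs \<longrightarrow> gedge T g (xs ! k) (xs ! Suc k)) \<and>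
     gedge T g (last xs) (hd xs)"

definition is_simple_cycle :: "('g, 'c) wang_tile set \<Rightarrow> 'g \<Rightarrow> ('g, 'c) wang_tile list \<Rightarrow> bool" where
  "is_simple_cycle T g xs \<longleftrightarrow> is_cycle T g xs \<and> distinct xs"

definition rot_class :: "'a list \<Rightarrow> 'a list set" where
  "rot_class xs = {rotate k xs | k. True}"

definition simple_cycles :: "('g, 'c) wang_tile set \<Rightarrow> 'g \<Rightarrow> ('g, 'c) wang_tile list set set" where
  "simple_cycles T g = {rot_class xs | xs. is_simple_cycle T g xs}"

text \<open>|w|_a for a cycle class w (independent of the representative).\<close>
definition occ :: "'a list set \<Rightarrow> 'a \<Rightarrow> nat" where
  "occ w a = count_list (SOME xs. xs \<in> w) a"

definition star_star :: "'g set \<Rightarrow> ('g, 'c) wang_tile set \<Rightarrow> bool" where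
  "star_star S T \<longleftrightarrow>
     (\<forall>g\<in>S. \<exists>xs. is_cycle T g xs) \<and>
     (\<exists>x :: 'g \<Rightarrow> ('g, 'c) wang_tile list set \<Rightarrow> real.
        (\<forall>g\<in>S. \<forall>w\<in>simple_cycles T g. x g w \<ge> 0) \<and>
        (\<exists>g\<in>S. \<exists>w\<in>simple_cycles T g. x g w \<noteq> 0) \<and>
        (\<forall>a\<in>T. \<forall>g\<in>S. \<forall>h\<in>S.
           (\<Sum>w\<in>simple_cycles T g. x g w * real (occ w a)) =
           (\<Sum>w\<in>simple_cycles T h. x h w * real (occ w a))))"

definition star_star' :: "'g set \<Rightarrow> 'c set \<Rightarrow> ('g, 'c) wang_tile set \<Rightarrow> bool" where
  "star_star' S C T \<longleftrightarrow>
     (\<exists>x :: ('g, 'c) wang_tile \<Rightarrow> real.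
        (\<forall>\<tau>\<in>T. x \<tau> \<ge> 0) \<and> (\<exists>\<tau>\<in>T. x \<tau> \<noteq> 0) \<and>
        (\<forall>g\<in>S. \<forall>c\<in>C.
           (\<Sum>\<tau>\<in>{\<tau>\<in>T. \<tau> (g, False) = c}. x \<tau>) =
           (\<Sum>\<tau>\<in>{\<tau>\<in>T. \<tau> (g, True) = c}. x \<tau>)))"

end

theory Submission
  imports Defs
begin

lemma count_list_rotate1: "count_list (rotate1 xs) a = count_list xs a"
  by (cases xs) auto

lemma count_list_rotate: "count_list (rotate k xs) a = count_list xs a"
  by (induction k) (auto simp: rotate_Suc count_list_rotate1)

lemma occ_rot: "occ (rot_class xs) a = count_list xs a"
proof -
  have "xs \<in> rot_class xs" unfolding rot_class_def by (metis (mono_tags) mem_Collect_eq rotate0 id_apply)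
  hence "(SOME ys. ys \<in> rot_class xs) \<in> rot_class xs" by (rule someI)
  then obtain k where "(SOME ys. ys \<in> rot_class xs) = rotate k xs" unfolding rot_class_def by auto
  thus ?thesis unfolding occ_def by (simp add: count_list_rotate)
qed

lemma count_distinct: "distinct xs \<Longrightarrow> count_list xs a = (if a \<in> set xs then 1 else 0)"
  by (induction xs) auto

lemma sum_count_list:
  assumes "finite T" "set xs \<subseteq> T"
  shows "(\<Sum>\<tau>\<in>{\<tau>\<in>T. f \<tau> = c}. real (count_list xs \<tau>)) = real (count_list (map f xs) c)"
  using assms(2)
proof (induction xs)
  case Nil then show ?case by simp
next
  case (Cons a xs)
  have fin: "finite {\<tau>\<in>T. f \<tau> = c}" using assms(1) by simp
  have "(\<Sum>\<tau>\<in>{\<tau>\<in>T. f \<tau> = c}. real (count_list (a#xs) \<tau>)) =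
        (\<Sum>\<tau>\<in>{\<tau>\<in>T. f \<tau> = c}. (if a = \<tau> then 1 else 0) + real (count_list xs \<tau>))"
    by (rule sum.cong) auto
  also have "\<dots> = (\<Sum>\<tau>\<in>{\<tau>\<in>T. f \<tau> = c}. (if a = \<tau> then 1 else 0)) + real (count_list (map f xs) c)"
    using Cons by (simp add: sum.distrib)
  also have "(\<Sum>\<tau>\<in>{\<tau>\<in>T. f \<tau> = c}. (if a = \<tau> then 1 else (0::real))) = (if f a = c then 1 else 0)"
    using Cons.prems fin by (simp add: sum.delta)
  finally show ?case by simp
qed

lemma cycle_map_rotate1:
  assumes "is_cycle T g xs"
  shows "map (\<lambda>\<tau>. \<tau> (g, False)) xs = map (\<lambda>\<tau>. \<tau> (g, True)) (rotate1 xs)"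
proof (rule nth_equalityI)
  show "length (map (\<lambda>\<tau>. \<tau> (g, False)) xs) = length (map (\<lambda>\<tau>. \<tau> (g, True)) (rotate1 xs))" by simp
next
  fix k assume k: "k < length (map (\<lambda>\<tau>. \<tau> (g, False)) xs)"
  hence k': "k < length xs" by simp
  have ne: "xs \<noteq> []" using assms unfolding is_cycle_def by auto
  show "map (\<lambda>\<tau>. \<tau> (g, False)) xs ! k = map (\<lambda>\<tau>. \<tau> (g, True)) (rotate1 xs) ! k"
  proof (cases "Suc k < length xs")
    case True
    then have "gedge T g (xs ! k) (xs ! Suc k)" using assms unfolding is_cycle_def by auto
    then show ?thesis using True k' by (simp add: nth_rotate1 gedge_def)
  next
    case False
    then have "Suc k = length xs" using k' by simp
    then have "k = length xs - 1" by simp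
    then have "xs ! k = last xs" "Suc k mod length xs = 0" using ne \<open>Suc k = length xs\<close> by (auto simp: last_conv_nth)
    moreover have "gedge T g (last xs) (hd xs)" using assms unfolding is_cycle_def by auto
    ultimately show ?thesis using k' ne by (simp add: nth_rotate1 gedge_def hd_conv_nth)
  qed
qed

lemma cycle_balance:
  assumes "is_cycle T g xs" "finite T"
  shows "(\<Sum>\<tau>\<in>{\<tau>\<in>T. \<tau> (g, False) = c}. real (count_list xs \<tau>)) =
         (\<Sum>\<tau>\<in>{\<tau>\<in>T. \<tau> (g, True) = c}. real (count_list xs \<tau>))"
proof -
  have s: "set xs \<subseteq> T" using assms unfolding is_cycle_def by auto
  have "count_list (map (\<lambda>\<tau>. \<tau> (g, False)) xs) c = count_list (rotate1 (map (\<lambda>\<tau>. \<tau> (g, True)) xs)) c"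
    using cycle_map_rotate1[OF assms(1)] by (simp add: rotate1_map)
  also have "\<dots> = count_list (map (\<lambda>\<tau>. \<tau> (g, True)) xs) c" by (rule count_list_rotate1)
  finally show ?thesis using sum_count_list[OF assms(2) s, of "\<lambda>\<tau>. \<tau> (g, False)" c]
    sum_count_list[OF assms(2) s, of "\<lambda>\<tau>. \<tau> (g, True)" c] by simp
qed

lemma find_cycle:
  assumes "finite P" "P \<noteq> {}" "\<forall>\<tau>\<in>P. \<exists>\<tau>'\<in>P. E \<tau> \<tau>'"
  shows "\<exists>xs. xs \<noteq> [] \<and> distinct xs \<and> set xs \<subseteq> P \<and>
     (\<forall>k. Suc k < length xs \<longrightarrow> E (xs!k) (xs!Suc k)) \<and> E (last xs) (hd xs)"
proof -
  obtain f where f: "\<forall>\<tau>\<in>P. f \<tau> \<in> P \<and> E \<tau> (f \<tau>)" using assms(3) by metis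
  obtain t0 where t0: "t0 \<in> P" using assms(2) by auto
  define s where "s n = (f ^^ n) t0" for n
  have sP: "s n \<in> P" for n by (induction n) (auto simp: s_def t0 f)
  have sS: "s (Suc n) = f (s n)" for n by (simp add: s_def)
  have "\<not> inj_on s {..card P}"
  proof
    assume "inj_on s {..card P}"
    hence "card (s ` {..card P}) = card P + 1" by (simp add: card_image)
    moreover have "card (s ` {..card P}) \<le> card P" using sP assms(1) by (intro card_mono) auto
    ultimately show False by simp
  qed
  then obtain i j where ij: "i < j" "s i = s j" unfolding inj_on_def by (metis nat_neq_iff)
  define J where "J = (LEAST j. \<exists>i<j. s i = s j)"
  have "\<exists>i<J. s i = s J" unfolding J_def by (rule LeastI[of _ j]) (use ij in auto)
  then obtain I where I: "I < J" "s I = s J" by auto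
  have minJ: "s a \<noteq> s b" if "a < b" "b < J" for a b
  proof
    assume "s a = s b"
    hence "J \<le> b" unfolding J_def by (intro Least_le) (use that in auto)
    thus False using that by simp
  qed
  define xs where "xs = map s [I..<J]"
  have inj: "inj_on s {I..<J}" unfolding inj_on_def by (metis atLeastLessThan_iff minJ nat_neq_iff)
  show ?thesis
  proof (intro exI conjI allI impI)
    show "xs \<noteq> []" using I by (simp add: xs_def)
    show "distinct xs" using inj by (simp add: xs_def distinct_map)
    show "set xs \<subseteq> P" using sP by (auto simp: xs_def)
    fix k assume "Suc k < length xs"
    then show "E (xs!k) (xs!Suc k)" using f sP sS by (simp add: xs_def)
  next
    have "last xs = s (J - 1)" using I by (simp add: xs_def last_map)
    moreover have "hd xs = s I" using I by (simp add: xs_def hd_map upt_conv_Cons)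
    moreover have "f (s (J - 1)) = s J" using sS[of "J - 1"] I by simp
    ultimately show "E (last xs) (hd xs)" using f sP I by metis
  qed
qed

lemma sum_nz_ex: "(\<Sum>i\<in>A. f i) \<noteq> (0::real) \<Longrightarrow> \<exists>i\<in>A. f i \<noteq> 0"
proof (rule ccontr)
  assume a: "(\<Sum>i\<in>A. f i) \<noteq> (0::real)" and "\<not> (\<exists>i\<in>A. f i \<noteq> 0)"
  then have "\<forall>i\<in>A. f i = 0" by simp
  then have "(\<Sum>i\<in>A. f i) = 0" by simp
  with a show False by simp
qed

lemma finite_simple_cycles:
  assumes "finite T" shows "finite (simple_cycles T g)"
proof -
  have "simple_cycles T g \<subseteq> rot_class ` {xs. set xs \<subseteq> T \<and> length xs \<le> card T}"
  proof
    fix w assume "w \<in> simple_cycles T g"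
    then obtain xs where w: "w = rot_class xs" "is_simple_cycle T g xs" unfolding simple_cycles_def by auto
    then have "set xs \<subseteq> T" "distinct xs" unfolding is_simple_cycle_def is_cycle_def by auto
    then have "length xs \<le> card T" using assms by (metis card_mono distinct_card)
    then show "w \<in> rot_class ` {xs. set xs \<subseteq> T \<and> length xs \<le> card T}" using w \<open>set xs \<subseteq> T\<close> by auto
  qed
  moreover have "finite {xs. set xs \<subseteq> T \<and> length xs \<le> card T}"
    using finite_lists_length_le[OF assms] by simp
  ultimately show ?thesis by (meson finite_imageI finite_subset)
qed

lemma decomp:
  assumes fin: "finite T"
  shows "(\<forall>\<tau>\<in>T. x \<tau> \<ge> 0) \<Longrightarrow>
    (\<forall>c. (\<Sum>\<tau>\<in>{\<tau>\<in>T. \<tau> (g, False) = c}. x \<tau>) = (\<Sum>\<tau>\<in>{\<tau>\<in>T. \<tau> (g, True) = c}. x \<tau>)) \<Longrightarrow>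
    \<exists>y. (\<forall>w\<in>simple_cycles T g. y w \<ge> 0) \<and>
        (\<forall>a\<in>T. (\<Sum>w\<in>simple_cycles T g. y w * real (occ w a)) = x a)"
proof (induction "card {\<tau>\<in>T. x \<tau> \<noteq> 0}" arbitrary: x rule: less_induct)
  case less
  define P where "P = {\<tau>\<in>T. x \<tau> \<noteq> 0}"
  have finP: "finite P" using fin by (simp add: P_def)
  show ?case
  proof (cases "P = {}")
    case True
    then show ?thesis by (intro exI[of _ "\<lambda>w. 0"]) (auto simp: P_def)
  next
    case False
    have pos: "x \<tau> > 0" if "\<tau> \<in> P" for \<tau> using that less.prems(1) by (force simp: P_def)
    have succ: "\<forall>\<tau>\<in>P. \<exists>\<tau>'\<in>P. gedge T g \<tau> \<tau>'"
    proof
      fix \<tau> assume t: "\<tau> \<in> P"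
      define c where "c = \<tau> (g, False)"
      have "x \<tau> \<le> (\<Sum>\<tau>\<in>{\<tau>\<in>T. \<tau> (g, False) = c}. x \<tau>)"
        using t fin less.prems(1) unfolding P_def c_def by (intro member_le_sum) auto
      also have "\<dots> = (\<Sum>\<tau>\<in>{\<tau>\<in>T. \<tau> (g, True) = c}. x \<tau>)" using less.prems(2) by blast
      finally have "(\<Sum>\<tau>\<in>{\<tau>\<in>T. \<tau> (g, True) = c}. x \<tau>) \<noteq> 0" using pos[OF t] by linarith
      then obtain \<tau>' where t': "\<tau>' \<in> {\<tau>\<in>T. \<tau> (g, True) = c}" "x \<tau>' \<noteq> 0"
        by (rule sum_nz_ex[THEN bexE])
      have "\<tau>' \<in> P" using t' unfolding P_def by simp
      moreover have "gedge T g \<tau> \<tau>'" using t t' unfolding gedge_def P_def c_def by simp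
      ultimately show "\<exists>\<tau>'\<in>P. gedge T g \<tau> \<tau>'" by blast
    qed
    obtain xs where xs: "xs \<noteq> []" "distinct xs" "set xs \<subseteq> P"
      "\<forall>k. Suc k < length xs \<longrightarrow> gedge T g (xs!k) (xs!Suc k)" "gedge T g (last xs) (hd xs)"
      using find_cycle[OF finP False succ] by blast
    have cyc: "is_cycle T g xs" using xs unfolding is_cycle_def P_def by auto
    have scyc: "is_simple_cycle T g xs" using cyc xs by (simp add: is_simple_cycle_def)
    define e where "e = Min (x ` set xs)"
    have e_in: "e \<in> x ` set xs" unfolding e_def using xs(1) by (intro Min_in) auto
    then obtain a0 where a0: "a0 \<in> set xs" "x a0 = e" by auto
    have e_pos: "e > 0" using pos a0 xs(3) by auto
    have e_le: "e \<le> x \<tau>" if "\<tau> \<in> set xs" for \<tau> unfolding e_def using that by (intro Min_le) auto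
    define x' where "x' \<tau> = x \<tau> - e * real (count_list xs \<tau>)" for \<tau>
    have cnt: "count_list xs \<tau> = (if \<tau> \<in> set xs then 1 else 0)" for \<tau> using count_distinct[OF xs(2)] .
    have x'nn: "\<forall>\<tau>\<in>T. x' \<tau> \<ge> 0" using less.prems(1) e_le by (auto simp: x'_def cnt)
    have x'bal: "\<forall>c. (\<Sum>\<tau>\<in>{\<tau>\<in>T. \<tau> (g, False) = c}. x' \<tau>) = (\<Sum>\<tau>\<in>{\<tau>\<in>T. \<tau> (g, True) = c}. x' \<tau>)"
    proof
      fix c
      show "(\<Sum>\<tau>\<in>{\<tau>\<in>T. \<tau> (g, False) = c}. x' \<tau>) = (\<Sum>\<tau>\<in>{\<tau>\<in>T. \<tau> (g, True) = c}. x' \<tau>)"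
      proof -
        have r: "(\<Sum>\<tau>\<in>A. x' \<tau>) = (\<Sum>\<tau>\<in>A. x \<tau>) - e * (\<Sum>\<tau>\<in>A. real (count_list xs \<tau>))" for A
          unfolding x'_def by (simp only: sum_subtractf sum_distrib_left)
        show ?thesis unfolding r using less.prems(2) cycle_balance[OF cyc fin, of c] by simp
      qed
    qed
    have sub: "{\<tau>\<in>T. x' \<tau> \<noteq> 0} \<subset> P"
    proof
      show "{\<tau>\<in>T. x' \<tau> \<noteq> 0} \<subseteq> P" using xs(3) by (auto simp: x'_def P_def cnt split: if_splits)
      have "a0 \<in> P" "x' a0 = 0" using a0 xs(3) by (auto simp: x'_def cnt)
      then show "{\<tau>\<in>T. x' \<tau> \<noteq> 0} \<noteq> P" by auto
    qed
    have "card {\<tau>\<in>T. x' \<tau> \<noteq> 0} < card {\<tau>\<in>T. x \<tau> \<noteq> 0}"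
      using psubset_card_mono[OF finP sub] by (simp add: P_def)
    from less.hyps[OF this x'nn x'bal] obtain y' where
      y': "\<forall>w\<in>simple_cycles T g. y' w \<ge> 0"
          "\<forall>a\<in>T. (\<Sum>w\<in>simple_cycles T g. y' w * real (occ w a)) = x' a" by blast
    define W where "W = rot_class xs"
    have W: "W \<in> simple_cycles T g" using scyc by (auto simp: W_def simple_cycles_def)
    have finSC: "finite (simple_cycles T g)" using finite_simple_cycles[OF fin] .
    define y where "y w = y' w + (if w = W then e else 0)" for w
    show ?thesis
    proof (intro exI[of _ y] conjI ballI)
      fix w assume "w \<in> simple_cycles T g" then show "y w \<ge> 0" using y' e_pos by (simp add: y_def)
    next
      fix a assume a: "a \<in> T"
      have "(\<Sum>w\<in>simple_cycles T g. y w * real (occ w a)) =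
          (\<Sum>w\<in>simple_cycles T g. y' w * real (occ w a)) +
          (\<Sum>w\<in>simple_cycles T g. (if w = W then e * real (occ W a) else 0))"
      proof -
        have "(\<Sum>w\<in>simple_cycles T g. y w * real (occ w a)) =
          (\<Sum>w\<in>simple_cycles T g. y' w * real (occ w a) + (if w = W then e * real (occ W a) else 0))"
          by (intro sum.cong) (auto simp: y_def algebra_simps)
        then show ?thesis by (simp only: sum.distrib)
      qed
      also have "\<dots> = x' a + e * real (count_list xs a)" using y' a W finSC
        by (simp add: sum.delta' W_def occ_rot)
      finally show "(\<Sum>w\<in>simple_cycles T g. y w * real (occ w a)) = x a" by (simp add: x'_def)
    qed
  qed
qed

theorem mainTheorem1:
  fixes S :: "'g set" and C :: "'c set" and T :: "('g, 'c) wang_tile set"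
  assumes "finite S" and "S \<noteq> {}" and "finite C" and "finite T"
    and "\<forall>\<tau>\<in>T. is_wang_tile S C \<tau>"
  shows "star_star' S C T \<longleftrightarrow> star_star S T"
proof
  assume "star_star' S C T"
  then obtain x :: "('g, 'c) wang_tile \<Rightarrow> real" where x: "\<forall>\<tau>\<in>T. x \<tau> \<ge> 0" "\<exists>\<tau>\<in>T. x \<tau> \<noteq> 0"
    "\<forall>g\<in>S. \<forall>c\<in>C. (\<Sum>\<tau>\<in>{\<tau>\<in>T. \<tau> (g, False) = c}. x \<tau>) = (\<Sum>\<tau>\<in>{\<tau>\<in>T. \<tau> (g, True) = c}. x \<tau>)"
    unfolding star_star'_def by blast
  obtain t0 where t0: "t0 \<in> T" "x t0 \<noteq> 0" using x(2) by blast
  have bal: "\<forall>c. (\<Sum>\<tau>\<in>{\<tau>\<in>T. \<tau> (g, False) = c}. x \<tau>) = (\<Sum>\<tau>\<in>{\<tau>\<in>T. \<tau> (g, True) = c}. x \<tau>)"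
    if g: "g \<in> S" for g
  proof
    fix c show "(\<Sum>\<tau>\<in>{\<tau>\<in>T. \<tau> (g, False) = c}. x \<tau>) = (\<Sum>\<tau>\<in>{\<tau>\<in>T. \<tau> (g, True) = c}. x \<tau>)"
    proof (cases "c \<in> C")
      case True then show ?thesis using x(3) g by blast
    next
      case False
      have "{\<tau>\<in>T. \<tau> (g, b) = c} = {}" for b using assms(5) g False by (auto simp: is_wang_tile_def)
      then have "{\<tau>\<in>T. \<tau> (g, False) = c} = {}" "{\<tau>\<in>T. \<tau> (g, True) = c} = {}" by blast+
      then show ?thesis by (simp only: sum.empty)
    qed
  qed
  have "\<forall>g\<in>S. \<exists>y. (\<forall>w\<in>simple_cycles T g. y w \<ge> 0) \<and>
        (\<forall>a\<in>T. (\<Sum>w\<in>simple_cycles T g. y w * real (occ w a)) = x a)"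
    using decomp[OF assms(4) x(1) bal] by blast
  then obtain y where y: "\<forall>g\<in>S. (\<forall>w\<in>simple_cycles T g. y g w \<ge> 0) \<and>
        (\<forall>a\<in>T. (\<Sum>w\<in>simple_cycles T g. y g w * real (occ w a)) = x a)" by metis
  have cyc: "\<forall>g\<in>S. \<exists>xs. is_cycle T g xs"
  proof
    fix g assume g: "g \<in> S"
    have "(\<Sum>w\<in>simple_cycles T g. y g w * real (occ w t0)) \<noteq> 0" using y g t0 by auto
    then obtain w where "w \<in> simple_cycles T g" using sum_nz_ex by blast
    then show "\<exists>xs. is_cycle T g xs" unfolding simple_cycles_def is_simple_cycle_def by auto
  qed
  obtain g0 where g0: "g0 \<in> S" using assms(2) by auto
  have "(\<Sum>w\<in>simple_cycles T g0. y g0 w * real (occ w t0)) \<noteq> 0" using y g0 t0 by auto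
  then obtain w0 where w0: "w0 \<in> simple_cycles T g0" "y g0 w0 * real (occ w0 t0) \<noteq> 0"
    using sum_nz_ex[of _ "simple_cycles T g0"] by blast
  then have w0': "y g0 w0 \<noteq> 0" by simp
  have A: "\<forall>g\<in>S. \<forall>w\<in>simple_cycles T g. y g w \<ge> 0" using y by blast
  have B: "\<exists>g\<in>S. \<exists>w\<in>simple_cycles T g. y g w \<noteq> 0" using g0 w0 w0' by blast
  have D: "\<forall>a\<in>T. \<forall>g\<in>S. \<forall>h\<in>S.
           (\<Sum>w\<in>simple_cycles T g. y g w * real (occ w a)) =
           (\<Sum>w\<in>simple_cycles T h. y h w * real (occ w a))" using y by simp
  show "star_star S T" unfolding star_star_def
    using cyc A B D by blast
next
  assume "star_star S T"
  then obtain x :: "'g \<Rightarrow> ('g, 'c) wang_tile list set \<Rightarrow> real" where x: "\<forall>g\<in>S. \<forall>w\<in>simple_cycles T g. x g w \<ge> 0"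
        "\<exists>g\<in>S. \<exists>w\<in>simple_cycles T g. x g w \<noteq> 0"
        "\<forall>a\<in>T. \<forall>g\<in>S. \<forall>h\<in>S.
           (\<Sum>w\<in>simple_cycles T g. x g w * real (occ w a)) =
           (\<Sum>w\<in>simple_cycles T h. x h w * real (occ w a))"
    unfolding star_star_def by blast
  obtain g0 w0 where g0: "g0 \<in> S" "w0 \<in> simple_cycles T g0" "x g0 w0 \<noteq> 0" using x(2) by blast
  define z where "z a = (\<Sum>w\<in>simple_cycles T g0. x g0 w * real (occ w a))" for a
  have finSC: "finite (simple_cycles T g)" for g using finite_simple_cycles[OF assms(4)] .
  have znn: "\<forall>\<tau>\<in>T. z \<tau> \<ge> 0" using x(1) g0 by (auto simp: z_def intro!: sum_nonneg)
  obtain xs0 where xs0: "w0 = rot_class xs0" "is_simple_cycle T g0 xs0"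
    using g0 unfolding simple_cycles_def by auto
  have ne: "xs0 \<noteq> []" "set xs0 \<subseteq> T" using xs0 unfolding is_simple_cycle_def is_cycle_def by auto
  define a where "a = hd xs0"
  have aT: "a \<in> T" "a \<in> set xs0" using ne by (auto simp: a_def)
  have o1: "occ w0 a \<ge> 1" using aT xs0 using count_list_0_iff[of xs0 a] by (simp add: occ_rot)
  have "x g0 w0 \<ge> 0" using x(1) g0(1,2) by blast
  then have "x g0 w0 > 0" using g0(3) by linarith
  then have "0 < x g0 w0 * real (occ w0 a)" using o1 by simp
  also have "\<dots> \<le> z a" unfolding z_def
  proof (rule member_le_sum)
    show "w0 \<in> simple_cycles T g0" by (rule g0(2))
    show "finite (simple_cycles T g0)" by (rule finSC)
    fix w assume "w \<in> simple_cycles T g0 - {w0}"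
    then have "x g0 w \<ge> 0" using x(1) g0(1) by blast
    then show "0 \<le> x g0 w * real (occ w a)" by simp
  qed
  finally have za: "z a \<noteq> 0" by simp
  have zbal: "(\<Sum>\<tau>\<in>{\<tau>\<in>T. \<tau> (g, False) = c}. z \<tau>) = (\<Sum>\<tau>\<in>{\<tau>\<in>T. \<tau> (g, True) = c}. z \<tau>)"
    if g: "g \<in> S" for g c
  proof -
    have zg: "z \<tau> = (\<Sum>w\<in>simple_cycles T g. x g w * real (occ w \<tau>))" if "\<tau> \<in> T" for \<tau>
      unfolding z_def by (rule x(3)[rule_format, OF that g0(1) g])
    have wb: "(\<Sum>\<tau>\<in>{\<tau>\<in>T. \<tau> (g, False) = c}. real (occ w \<tau>)) = (\<Sum>\<tau>\<in>{\<tau>\<in>T. \<tau> (g, True) = c}. real (occ w \<tau>))"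
      if wS: "w \<in> simple_cycles T g" for w
    proof -
      obtain xs where "w = rot_class xs" "is_simple_cycle T g xs" using wS unfolding simple_cycles_def by blast
      then show ?thesis using cycle_balance[OF _ assms(4), of g xs c] by (simp add: occ_rot is_simple_cycle_def)
    qed
    have "(\<Sum>\<tau>\<in>{\<tau>\<in>T. \<tau> (g, False) = c}. z \<tau>) = (\<Sum>\<tau>\<in>{\<tau>\<in>T. \<tau> (g, False) = c}. \<Sum>w\<in>simple_cycles T g. x g w * real (occ w \<tau>))"
      using zg by (intro sum.cong) auto
    also have "\<dots> = (\<Sum>w\<in>simple_cycles T g. x g w * (\<Sum>\<tau>\<in>{\<tau>\<in>T. \<tau> (g, False) = c}. real (occ w \<tau>)))"
      by (subst sum.swap) (simp add: sum_distrib_left)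
    also have "\<dots> = (\<Sum>w\<in>simple_cycles T g. x g w * (\<Sum>\<tau>\<in>{\<tau>\<in>T. \<tau> (g, True) = c}. real (occ w \<tau>)))"
      using wb by (intro sum.cong) auto
    also have "\<dots> = (\<Sum>\<tau>\<in>{\<tau>\<in>T. \<tau> (g, True) = c}. \<Sum>w\<in>simple_cycles T g. x g w * real (occ w \<tau>))"
      by (subst sum.swap) (simp add: sum_distrib_left)
    also have "\<dots> = (\<Sum>\<tau>\<in>{\<tau>\<in>T. \<tau> (g, True) = c}. z \<tau>)"
      using zg by (intro sum.cong) auto
    finally show ?thesis .
  qed
  show "star_star' S C T" unfolding star_star'_def
  proof (intro exI[of _ z] conjI)
    show "\<forall>\<tau>\<in>T. 0 \<le> z \<tau>" by (rule znn)
    show "\<exists>\<tau>\<in>T. z \<tau> \<noteq> 0" using za aT(1) by blast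
    show "\<forall>g\<in>S. \<forall>c\<in>C. (\<Sum>\<tau>\<in>{\<tau>\<in>T. \<tau> (g, False) = c}. z \<tau>) = (\<Sum>\<tau>\<in>{\<tau>\<in>T. \<tau> (g, True) = c}. z \<tau>)"
      using zbal by blast
  qed
qed

end
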